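(* Let $Q=(q_n)_{n\ge1}$ be a basic sequence that is infinite in limit, and let $F_1,F_2$ be $Q$-special sequences. Then $|x_{F_1}-x_{F_2}|\le d(F_1,F_2)$.
   Context: A basic sequence is a sequence $Q=(q_n)_{n\ge1}$ of integers with $q_n\ge 2$; it is infinite in limit if $q_n\to\infty$. $\mathbb{N}$ denotes the positive integers. For each positive integer $j$ let $\nu_j=\min\{N : q_m\ge 2j^2 \text{ for all } m\ge N\}$. Define $l_1=\max(\nu_2-1,1)$ and, recursively for $i\ge 2$, $l_i=\max\big(\min\{k\in\mathbb{N} : l_1+2l_2+\cdots+(i-1)l_{i-1}+ik\ge \nu_{i+1}-1\},1\big)$. Put $L_i=\sum_{j=1}^i jl_j$ (with $L_0=0$). Let $S_Q=\{(a,b,c)\in\mathbb{N}^3 : b\le l_a,\ c\le a\}$ and $\phi_Q(a,b,c)=L_{a-1}+(b-1)a+c$; $\phi_Q$ is a bijection $S_Q\to\mathbb{N}$. A $Q$-special sequence is a family of integers $F=(F_{(a,b,c)})_{(a,b,c)\in S_Q}$ with $F_{(a,b,1)}=0$ for all $(a,b,1)\in S_Q$ and $\frac{F_{(a,b,c)}}{q_{\phi_Q(a,b,c)}}\in\left[\frac{c-1}{a}-\frac{1}{2a^2},\frac{c-1}{a}+\frac{1}{2a^2}\right]$ for $(a,b,c)\in S_Q$ with $c>1$. Let $\Gamma_Q$ be the set of $Q$-special sequences. For $F\in\Gamma_Q$ put $E_{F,n}=F_{\phi_Q^{-1}(n)}$ and $x_F=\sum_{n=1}^\infty \frac{E_{F,n}}{q_1q_2\cdots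 q_n}$. For $F_1\ne F_2$ in $\Gamma_Q$ let $\zeta_{F_1,F_2}=\min\{n : E_{F_1,n}\ne E_{F_2,n}\}$ and define $d(F_1,F_2)=\frac{1}{q_1q_2\cdots q_{\zeta_{F_1,F_2}-1}}$ (empty product equal to $1$); set $d(F,F)=0$. *)

theory Defs
  imports Complex_Main
begin

text \<open>A basic sequence q (indexed from 1; the value q 0 is irrelevant).\<close>
definition basic_seq :: "(nat \<Rightarrow> int) \<Rightarrow> bool" where
  "basic_seq q \<longleftrightarrow> (\<forall>n\<ge>1. q n \<ge> 2)"

definition infinite_in_limit :: "(nat \<Rightarrow> int) \<Rightarrow> bool" where
  "infinite_in_limit q \<longleftrightarrow> filterlim q at_top sequentially"

definition nu :: "(nat \<Rightarrow> int) \<Rightarrow> nat \<Rightarrow> nat" where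
  "nu q j = (LEAST N::nat. N \<ge> 1 \<and> (\<forall>m\<ge>N. q m \<ge> 2 * int j ^ 2))"

definition lnext :: "(nat \<Rightarrow> int) \<Rightarrow> nat \<Rightarrow> nat \<Rightarrow> nat" where
  "lnext q i Lprev =
     (if i = 1 then max (nu q 2 - 1) 1
      else max (LEAST k::nat. k \<ge> 1 \<and> Lprev + i * k \<ge> nu q (i + 1) - 1) 1)"

primrec Lsum :: "(nat \<Rightarrow> int) \<Rightarrow> nat \<Rightarrow> nat" where
  "Lsum q 0 = 0"
| "Lsum q (Suc i) = Lsum q i + Suc i * lnext q (Suc i) (Lsum q i)"

definition lseq :: "(nat \<Rightarrow> int) \<Rightarrow> nat \<Rightarrow> nat" where
  "lseq q i = lnext q i (Lsum q (i - 1))"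

definition SQ :: "(nat \<Rightarrow> int) \<Rightarrow> (nat \<times> nat \<times> nat) set" where
  "SQ q = {(a, b, c). a \<ge> 1 \<and> b \<ge> 1 \<and> c \<ge> 1 \<and> b \<le> lseq q a \<and> c \<le> a}"

definition phiQ :: "(nat \<Rightarrow> int) \<Rightarrow> nat \<times> nat \<times> nat \<Rightarrow> nat" where
  "phiQ q t = (case t of (a, b, c) \<Rightarrow> Lsum q (a - 1) + (b - 1) * a + c)"

definition phiQ_inv :: "(nat \<Rightarrow> int) \<Rightarrow> nat \<Rightarrow> nat \<times> nat \<times> nat" where
  "phiQ_inv q n = (THE t. t \<in> SQ q \<and> phiQ q t = n)"

text \<open>Q-special sequences: families indexed by S_Q, represented as functions on triples
  (values outside S_Q are irrelevant).\<close>
definition special_seq :: "(nat \<Rightarrow> int) \<Rightarrow> (nat \<times> nat \<times> nat \<Rightarrow> int) \<Rightarrow> bool" where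
  "special_seq q F \<longleftrightarrow>
     (\<forall>a b. (a, b, 1) \<in> SQ q \<longrightarrow> F (a, b, 1) = 0) \<and>
     (\<forall>a b c. (a, b, c) \<in> SQ q \<and> c > 1 \<longrightarrow>
        real_of_int (F (a, b, c)) / real_of_int (q (phiQ q (a, b, c)))
          \<in> {real (c - 1) / real a - 1 / (2 * real a ^ 2) ..
              real (c - 1) / real a + 1 / (2 * real a ^ 2)})"

definition GammaQ :: "(nat \<Rightarrow> int) \<Rightarrow> (nat \<times> nat \<times> nat \<Rightarrow> int) set" where
  "GammaQ q = {F. special_seq q F}"

definition EF :: "(nat \<Rightarrow> int) \<Rightarrow> (nat \<times> nat \<times> nat \<Rightarrow> int) \<Rightarrow> nat \<Rightarrow> int" where
  "EF q F n = F (phiQ_inv q n)"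

definition xF :: "(nat \<Rightarrow> int) \<Rightarrow> (nat \<times> nat \<times> nat \<Rightarrow> int) \<Rightarrow> real" where
  "xF q F = (\<Sum>n. real_of_int (EF q F (n + 1)) / (\<Prod>k\<in>{1..n+1}. real_of_int (q k)))"

definition zetaF :: "(nat \<Rightarrow> int) \<Rightarrow> (nat \<times> nat \<times> nat \<Rightarrow> int) \<Rightarrow> (nat \<times> nat \<times> nat \<Rightarrow> int) \<Rightarrow> nat" where
  "zetaF q F1 F2 = (LEAST n. n \<ge> 1 \<and> EF q F1 n \<noteq> EF q F2 n)"

text \<open>d(F1,F2); F1 = F2 as families indexed by S_Q iff all E_{F,n} (n >= 1) agree.\<close>
definition dF :: "(nat \<Rightarrow> int) \<Rightarrow> (nat \<times> nat \<times> nat \<Rightarrow> int) \<Rightarrow> (nat \<times> nat \<times> nat \<Rightarrow> int) \<Rightarrow> real" where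
  "dF q F1 F2 =
     (if (\<forall>t\<in>SQ q. F1 t = F2 t) then 0
      else 1 / (\<Prod>k\<in>{1..<zetaF q F1 F2}. real_of_int (q k)))"

end

theory Submission imports Defs begin

lemma lnext_ge1: "lnext q i L \<ge> 1" by (simp add: lnext_def)
lemma lseq_ge1: "lseq q i \<ge> 1" unfolding lseq_def by (rule lnext_ge1)
lemma Lsum_step: "a \<ge> 1 \<Longrightarrow> Lsum q a = Lsum q (a-1) + a * lseq q a"
  by (cases a) (auto simp: lseq_def)
lemma Lsum_Suc_gt: "Lsum q i < Lsum q (Suc i)"
  using lnext_ge1[of q "Suc i" "Lsum q i"] by simp
lemma Lsum_mono: "strict_mono (Lsum q)"
  unfolding strict_mono_Suc_iff using Lsum_Suc_gt by blast
lemma Lsum_ge: "Lsum q a \<ge> a"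
  by (induction a) (simp, metis Lsum_Suc_gt le_less_trans Suc_leI)

lemma phi_range:
  assumes "(a,b,c) \<in> SQ q"
  shows "Lsum q (a-1) < phiQ q (a,b,c) \<and> phiQ q (a,b,c) \<le> Lsum q a"
proof -
  from assms have a: "a \<ge> 1" "b \<ge> 1" "c \<ge> 1" "b \<le> lseq q a" "c \<le> a"
    by (auto simp: SQ_def)
  have "(b-1)*a \<le> (lseq q a - 1)*a" using a by (intro mult_le_mono1) simp
  moreover have "(lseq q a - 1)*a + a = a * lseq q a" using lseq_ge1[of q a]
    by (cases "lseq q a") auto
  ultimately have "(b-1)*a + c \<le> a * lseq q a" using a by linarith
  then show ?thesis using a Lsum_step[of a q] by (auto simp: phiQ_def)
qed

lemma block_unique:
  assumes "1\<le>a" "1\<le>a'" "Lsum q (a-1) < n" "n \<le> Lsum q a" "Lsum q (a'-1) < n" "n \<le> Lsum q a'"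
  shows "a = a'"
proof (rule ccontr)
  assume "a \<noteq> a'"
  then consider "a < a'" | "a' < a" by linarith
  then show False
  proof cases
    case 1
    then have "Lsum q a \<le> Lsum q (a'-1)" by (simp add: strict_mono_less_eq[OF Lsum_mono])
    then show False using assms by linarith
  next
    case 2
    then have "Lsum q a' \<le> Lsum q (a-1)" by (simp add: strict_mono_less_eq[OF Lsum_mono])
    then show False using assms by linarith
  qed
qed

lemma divmod_aux: "(y::nat) < a \<Longrightarrow> (x*a+y) div a = x \<and> (x*a+y) mod a = y"
  by simp

lemma phi_inj:
  assumes "t \<in> SQ q" "t' \<in> SQ q" "phiQ q t = phiQ q t'"
  shows "t = t'"
proof -
  obtain a b c a' b' c' where t: "t = (a,b,c)" "t' = (a',b',c')" by (cases t, cases t') auto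
  have h: "a \<ge> 1" "b \<ge> 1" "c \<ge> 1" "c \<le> a" "a' \<ge> 1" "b' \<ge> 1" "c' \<ge> 1" "c' \<le> a'"
    using assms t by (auto simp: SQ_def)
  have "a = a'" using phi_range[of a b c q] phi_range[of a' b' c' q] assms t h
    by (intro block_unique[of a a' q "phiQ q t"]) auto
  then have e: "(b-1)*a + (c-1) = (b'-1)*a + (c'-1)" using assms t h by (auto simp: phiQ_def)
  have m1: "((b-1)*a + (c-1)) div a = b-1 \<and> ((b-1)*a + (c-1)) mod a = c-1"
    using h by (intro divmod_aux) auto
  have m2: "((b'-1)*a + (c'-1)) div a = b'-1 \<and> ((b'-1)*a + (c'-1)) mod a = c'-1"
    using h \<open>a = a'\<close> by (intro divmod_aux) auto
  have "b-1 = b'-1" "c-1 = c'-1" using m1 m2 e by metis+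
  then show ?thesis using t h \<open>a = a'\<close> by auto
qed

lemma phi_surj:
  assumes "n \<ge> 1" shows "\<exists>t\<in>SQ q. phiQ q t = n"
proof -
  define a where "a = (LEAST a. n \<le> Lsum q a)"
  have na: "n \<le> Lsum q a" unfolding a_def by (rule LeastI[of _ n]) (rule Lsum_ge)
  have a1: "a \<ge> 1" using na assms by (cases a) auto
  have lt: "Lsum q (a-1) < n" using not_less_Least[of "a-1" "\<lambda>a. n \<le> Lsum q a"] a1
    unfolding a_def[symmetric] by auto
  define r where "r = n - Lsum q (a-1) - 1"
  have r: "r < lseq q a * a" using Lsum_step[OF a1, of q] na lt unfolding r_def by (simp add: mult.commute)
  define b where "b = r div a + 1"
  define c where "c = r mod a + 1"
  have "b \<le> lseq q a" unfolding b_def using less_mult_imp_div_less[OF r] by simp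
  moreover have "c \<le> a" unfolding c_def using a1 by (simp add: Suc_leI)
  ultimately have "(a,b,c) \<in> SQ q" using a1 by (simp add: SQ_def b_def c_def)
  moreover have "phiQ q (a,b,c) = n"
    unfolding phiQ_def b_def c_def using lt r_def div_mult_mod_eq[of r a] by simp
  ultimately show ?thesis by blast
qed

lemma phi_ex1: "n \<ge> 1 \<Longrightarrow> \<exists>!t. t\<in>SQ q \<and> phiQ q t = n"
  using phi_surj phi_inj by metis

lemma phiQ_inv_prop: "n \<ge> 1 \<Longrightarrow> phiQ_inv q n \<in> SQ q \<and> phiQ q (phiQ_inv q n) = n"
  unfolding phiQ_inv_def by (rule theI'[OF phi_ex1])

lemma phiQ_inv_phi: assumes "t \<in> SQ q" shows "phiQ_inv q (phiQ q t) = t"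
proof -
  obtain a b c where t: "t = (a,b,c)" by (cases t) auto
  have "phiQ q t \<ge> 1" using phi_range[of a b c q] assms t by auto
  then show ?thesis unfolding phiQ_inv_def using assms
    by (intro the1_equality[OF phi_ex1]) auto
qed


lemma frac_lt1: assumes "(A::real) \<ge> 1" "C \<le> A" "C \<ge> 1"
  shows "(C - 1)/A + 1/(2*A^2) < 1"
proof -
  have "(C-1)/A \<le> (A-1)/A" using assms by (intro divide_right_mono) auto
  moreover have "(A-1)/A + 1/(2*A^2) < 1" using assms by (simp add: field_simps power2_eq_square)
  ultimately show ?thesis by linarith
qed

lemma frac_gt0: assumes "(A::real) \<ge> 1" "C \<ge> 2"
  shows "(C - 1)/A - 1/(2*A^2) > 0"
proof -
  have "1/A \<le> (C-1)/A" using assms by (intro divide_right_mono) auto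
  moreover have "1/A - 1/(2*A^2) > 0" using assms by (simp add: field_simps power2_eq_square)
  ultimately show ?thesis by linarith
qed

lemma F_bounds:
  assumes q: "basic_seq q" and F: "special_seq q F" and t: "t \<in> SQ q"
  shows "0 \<le> F t \<and> F t \<le> q (phiQ q t) - 1"
proof -
  obtain a b c where tt: "t = (a,b,c)" by (cases t) auto
  have h: "a \<ge> 1" "c \<ge> 1" "c \<le> a" using t tt by (auto simp: SQ_def)
  have pn: "phiQ q t \<ge> 1" using phi_range[of a b c q] t tt by auto
  have qp: "q (phiQ q t) \<ge> 2" using q pn by (auto simp: basic_seq_def)
  show ?thesis
  proof (cases "c = 1")
    case True
    then show ?thesis using F t tt qp by (auto simp: special_seq_def)
  next
    case False
    then have c2: "c > 1" using h by simp
    let ?x = "real_of_int (F t) / real_of_int (q (phiQ q t))"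
    have I: "?x \<in> {real (c - 1) / real a - 1 / (2 * real a ^ 2) ..
              real (c - 1) / real a + 1 / (2 * real a ^ 2)}"
      using F t tt c2 by (auto simp: special_seq_def)
    have rc: "real (c-1) = real c - 1" using h by simp
    have "?x < 1" using I frac_lt1[of "real a" "real c"] h rc by auto
    moreover have "?x > 0" using I frac_gt0[of "real a" "real c"] h rc c2 by auto
    moreover have qpos: "real_of_int (q (phiQ q t)) > 0" using qp by simp
    ultimately have "real_of_int (F t) < real_of_int (q (phiQ q t))" "real_of_int (F t) > 0"
      by (simp_all add: divide_less_eq zero_less_divide_iff)
    then show ?thesis by linarith
  qed
qed

lemma E_bounds:
  assumes "basic_seq q" "special_seq q F" "n \<ge> 1"
  shows "0 \<le> EF q F n \<and> EF q F n \<le> q n - 1"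
  using F_bounds[OF assms(1,2), of "phiQ_inv q n"] phiQ_inv_prop[OF assms(3), of q]
  by (simp add: EF_def)


definition PP :: "(nat \<Rightarrow> int) \<Rightarrow> nat \<Rightarrow> real" where
  "PP q n = (\<Prod>k\<in>{1..n}. real_of_int (q k))"

lemma PP_Suc: "PP q (Suc n) = PP q n * real_of_int (q (Suc n))"
  unfolding PP_def by (simp add: prod.cl_ivl_Suc)

lemma PP_ge: "basic_seq q \<Longrightarrow> PP q n \<ge> 2^n"
proof (induction n)
  case 0 then show ?case by (simp add: PP_def)
next
  case (Suc n)
  have "real_of_int (q (Suc n)) \<ge> 2" using Suc.prems by (auto simp: basic_seq_def)
  moreover have "0 \<le> PP q n" using Suc by (smt (verit) zero_le_power)
  ultimately have "2^n * 2 \<le> PP q n * real_of_int (q (Suc n))"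
    using Suc by (intro mult_mono) auto
  then show ?case by (simp add: PP_Suc mult.commute)
qed

lemma PP_pos: "basic_seq q \<Longrightarrow> PP q n > 0"
  using PP_ge[of q n] by (smt (verit) zero_less_power)

lemma inv_PP_lim: assumes "basic_seq q" shows "(\<lambda>n. 1 / PP q n) \<longlonglongrightarrow> 0"
proof (rule tendsto_sandwich[of "\<lambda>n. 0" _ _ "\<lambda>n. (1/2::real)^n"])
  show "\<forall>\<^sub>F n in sequentially. 1 / PP q n \<le> (1/2)^n"
    using PP_ge[OF assms] PP_pos[OF assms]
    by (auto simp: power_one_over intro!: always_eventually frac_le)
  show "\<forall>\<^sub>F n in sequentially. 0 \<le> 1 / PP q n"
    using PP_pos[OF assms] by (auto intro!: always_eventually less_imp_le)
  show "(\<lambda>n. (1/2::real)^n) \<longlonglongrightarrow> 0" by (rule LIMSEQ_power_zero) simp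
qed simp

lemma tel:
  assumes q: "basic_seq q"
  shows "(\<lambda>n. if m \<le> n then real_of_int (q (n+1) - 1) / PP q (n+1) else 0) sums (1 / PP q m)"
proof -
  define G where "G n = (if n \<le> m then 1 / PP q m else 1 / PP q n)" for n
  have "G \<longlonglongrightarrow> 0"
  proof -
    have "\<forall>\<^sub>F n in sequentially. 1 / PP q n = G n"
      unfolding G_def eventually_sequentially by (rule exI[of _ "Suc m"]) auto
    with inv_PP_lim[OF q] show ?thesis by (rule Lim_transform_eventually)
  qed
  from telescope_sums'[OF this] have "(\<lambda>n. G n - G (Suc n)) sums (G 0 - 0)" .
  moreover have "G 0 = 1 / PP q m" by (simp add: G_def)
  moreover have "G n - G (Suc n) = (if m \<le> n then real_of_int (q (n+1) - 1) / PP q (n+1) else 0)" for n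
  proof (cases "m \<le> n")
    case True
    have "G n = 1 / PP q n" using True by (auto simp: G_def)
    moreover have "G (Suc n) = 1 / PP q (Suc n)" using True by (auto simp: G_def)
    moreover have "q (Suc n) \<ge> 2" using q unfolding basic_seq_def by simp
    then have "q (Suc n) \<noteq> 0" by simp
    ultimately show ?thesis using True PP_pos[OF q, of n]
      by (simp add: PP_Suc field_simps)
  next
    case False then show ?thesis by (simp add: G_def)
  qed
  ultimately show ?thesis by simp
qed


theorem mainTheorem18:
  fixes q :: "nat \<Rightarrow> int" and F1 F2 :: "nat \<times> nat \<times> nat \<Rightarrow> int"
  assumes "basic_seq q" and "infinite_in_limit q"
    and "F1 \<in> GammaQ q" and "F2 \<in> GammaQ q"
  shows "\<bar>xF q F1 - xF q F2\<bar> \<le> dF q F1 F2"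
proof -
  note q = assms(1)
  have S1: "special_seq q F1" and S2: "special_seq q F2" using assms(3,4) by (auto simp: GammaQ_def)
  define e1 where "e1 n = real_of_int (EF q F1 (n + 1)) / PP q (n+1)" for n
  define e2 where "e2 n = real_of_int (EF q F2 (n + 1)) / PP q (n+1)" for n
  define g where "g m n = (if m \<le> n then real_of_int (q (n+1) - 1) / PP q (n+1) else 0)" for m n
  have gs: "g m sums (1 / PP q m)" for m unfolding g_def by (rule tel[OF q])
  have x1: "xF q F1 = suminf e1" unfolding xF_def e1_def PP_def by simp
  have x2: "xF q F2 = suminf e2" unfolding xF_def e2_def PP_def by simp
  have eb: "\<bar>real_of_int (EF q F (n+1)) / PP q (n+1)\<bar> \<le> g 0 n" if "special_seq q F" for F n
  proof -
    have "0 \<le> EF q F (n+1) \<and> EF q F (n+1) \<le> q (n+1) - 1" using E_bounds[OF q that] by simp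
    then show ?thesis using PP_pos[OF q, of "n+1"] unfolding g_def
      by (auto intro!: divide_right_mono)
  qed
  have sum1: "summable e1" unfolding e1_def
    by (rule summable_rabs_cancel, rule summable_rabs_comparison_test[OF _ sums_summable[OF gs[of 0]]])
       (use eb[OF S1] in auto)
  have sum2: "summable e2" unfolding e2_def
    by (rule summable_rabs_cancel, rule summable_rabs_comparison_test[OF _ sums_summable[OF gs[of 0]]])
       (use eb[OF S2] in auto)
  show ?thesis
  proof (cases "\<forall>t\<in>SQ q. F1 t = F2 t")
    case True
    have "EF q F1 n = EF q F2 n" if "n \<ge> 1" for n
      using True phiQ_inv_prop[OF that, of q] by (simp add: EF_def)
    then have "e1 = e2" unfolding e1_def e2_def by auto
    then show ?thesis using x1 x2 True by (simp add: dF_def)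
  next
    case False
    then obtain t where t: "t \<in> SQ q" "F1 t \<noteq> F2 t" by auto
    obtain a b c where tt: "t = (a,b,c)" by (cases t) auto
    have n1: "phiQ q t \<ge> 1" using phi_range[of a b c q] t tt by auto
    have ex: "phiQ q t \<ge> 1 \<and> EF q F1 (phiQ q t) \<noteq> EF q F2 (phiQ q t)"
      using n1 t phiQ_inv_phi[OF t(1)] by (simp add: EF_def)
    define Z where "Z = zetaF q F1 F2"
    have Z: "Z \<ge> 1 \<and> EF q F1 Z \<noteq> EF q F2 Z" unfolding Z_def zetaF_def by (rule LeastI[of "\<lambda>n. n \<ge> 1 \<and> EF q F1 n \<noteq> EF q F2 n", OF ex])
    have before: "EF q F1 k = EF q F2 k" if "1 \<le> k" "k < Z" for k
      using not_less_Least[of k "\<lambda>n. n \<ge> 1 \<and> EF q F1 n \<noteq> EF q F2 n"] that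
      unfolding Z_def zetaF_def by auto
    define m where "m = Z - 1"
    have Zm: "Z = Suc m" using Z m_def by simp
    have db: "\<bar>e1 n - e2 n\<bar> \<le> g m n" for n
    proof (cases "m \<le> n")
      case True
      have "0 \<le> EF q F1 (n+1) \<and> EF q F1 (n+1) \<le> q (n+1) - 1" using E_bounds[OF q S1] by simp
      moreover have "0 \<le> EF q F2 (n+1) \<and> EF q F2 (n+1) \<le> q (n+1) - 1" using E_bounds[OF q S2] by simp
      ultimately have "\<bar>real_of_int (EF q F1 (n+1)) - real_of_int (EF q F2 (n+1))\<bar> \<le> real_of_int (q (n+1) - 1)"
        by linarith
      then have "\<bar>real_of_int (EF q F1 (n+1)) - real_of_int (EF q F2 (n+1))\<bar> / PP q (n+1)
          \<le> real_of_int (q (n+1) - 1) / PP q (n+1)"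
        using PP_pos[OF q, of "n+1"] by (intro divide_right_mono) auto
      then show ?thesis using True PP_pos[OF q, of "n+1"] unfolding e1_def e2_def g_def
        by (simp add: diff_divide_distrib[symmetric] abs_divide)
    next
      case False
      then have "EF q F1 (n+1) = EF q F2 (n+1)" using before[of "n+1"] Zm by simp
      then show ?thesis using False unfolding e1_def e2_def g_def by simp
    qed
    have sd: "summable (\<lambda>n. \<bar>e1 n - e2 n\<bar>)"
      by (rule summable_rabs_comparison_test[OF _ sums_summable[OF gs[of m]]]) (use db in auto)
    have "\<bar>xF q F1 - xF q F2\<bar> = \<bar>\<Sum>n. e1 n - e2 n\<bar>" using x1 x2 suminf_diff[OF sum1 sum2] by simp
    also have "\<dots> \<le> (\<Sum>n. \<bar>e1 n - e2 n\<bar>)" by (rule summable_rabs[OF sd])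
    also have "\<dots> \<le> suminf (g m)" by (rule suminf_le[OF db sd sums_summable[OF gs[of m]]])
    also have "\<dots> = 1 / PP q m" using gs[of m] by (rule sums_unique[symmetric])
    also have "\<dots> = dF q F1 F2" using False unfolding dF_def PP_def Z_def[symmetric] Zm
      by (auto simp: atLeastLessThanSuc_atLeastAtMost)
    finally show ?thesis .
  qed
qed

end
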